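(* Assume Assumption A and let $(A_i,\tau_i)_{i=1}^n$ be a solution of system (S) with nonnegative initial data $\varphi_i\in X_\alpha$ satisfying $\int_{-\tau_{i0}}^0 f_i(Z_{i\varphi}(\sigma))\,d\sigma=1$ for all $i=1,\dots,n$. Then for each $i=1,\dots,n$ there exists $t_i^*>0$ such that $t_i^*-\tau_i(t_i^* )=0$.
   Context: For $\alpha>0$, $X_\alpha:=\{\phi\in C((-\infty,0]): e^{-\alpha|\cdot|}\phi(\cdot)\in BUC((-\infty,0])\cap \mathrm{Lip}((-\infty,0])\}$. The $n$-species system (S): for $i=1,\dots,n$, $$A_i'(t)=-\mu_{A_i}A_i(t)+\beta_i e^{-\mu_{J_i}\tau_i(t)}\frac{f_i(Z_i(t))}{f_i(Z_i(t-\tau_i(t)))}A_i(t-\tau_i(t)),\quad t\ge0,$$ $$\int_{t-\tau_i(t)}^{t}f_i(Z_i(\sigma))\,d\sigma=\int_{-\tau_{i0}}^{0}f_i(Z_{i\varphi}(\sigma))\,d\sigma,\quad t\ge0,$$ with $A_i(t)=\varphi_i(t)$ for $t\le0$, $\tau_i(0)=\tau_{i0}\ge0$, where $Z_i(t)=\sum_{j=1}^n\zeta_{ij}A_j(t)$, $Z_{i\varphi}(t)=\sum_{j=1}^n\zeta_{ij}\varphi_j(t)$, $\zeta_{ij}\ge0$. A solution consists of continuous $A_i:\mathbb{R}\to[0,\infty)$, differentiable on $[0,\infty)$, and $\tau_i:[0,\infty)\to[0,\infty)$ satisfying these equations for all $t\ge0$. Assumption A: for each $i$, (i) $\mu_{A_i}>0$,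 $\mu_{J_i}>0$, $\beta_i>0$, $\zeta_{ii}>0$; (ii) $f_i:\mathbb{R}\to(0,\infty)$ is Lipschitz continuous and continuously differentiable with $f_i>0$, $f_i'\le0$ on $\mathbb{R}$, $\lim_{x\to+\infty}f_i(x)=0$, and $\sup_{x\ge0}\frac{f_i(x)}{f_i(cx)}<+\infty$ for every $c\ge1$. *)

theory Defs
  imports "HOL-Analysis.Analysis"
begin

definition BUC_neg :: "(real \<Rightarrow> real) \<Rightarrow> bool" where
  "BUC_neg g \<longleftrightarrow> bounded (g ` {..0}) \<and> uniformly_continuous_on {..0} g"

definition Lip_neg :: "(real \<Rightarrow> real) \<Rightarrow> bool" where
  "Lip_neg g \<longleftrightarrow> (\<exists>C. C-lipschitz_on {..0} g)"

definition X_alpha :: "real \<Rightarrow> (real \<Rightarrow> real) set" where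
  "X_alpha \<alpha> = {\<phi>. continuous_on {..0} \<phi> \<and>
      BUC_neg (\<lambda>s. exp (- \<alpha> * \<bar>s\<bar>) * \<phi> s) \<and>
      Lip_neg (\<lambda>s. exp (- \<alpha> * \<bar>s\<bar>) * \<phi> s)}"

definition assumption_A ::
  "nat \<Rightarrow> (nat \<Rightarrow> real) \<Rightarrow> (nat \<Rightarrow> real) \<Rightarrow> (nat \<Rightarrow> real) \<Rightarrow> (nat \<Rightarrow> nat \<Rightarrow> real)
   \<Rightarrow> (nat \<Rightarrow> real \<Rightarrow> real) \<Rightarrow> bool" where
  "assumption_A n muA muJ beta zeta f \<longleftrightarrow>
     (\<forall>i<n. muA i > 0 \<and> muJ i > 0 \<and> beta i > 0 \<and> zeta i i > 0 \<and>
        (\<forall>j<n. zeta i j \<ge> 0) \<and>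
        (\<exists>L. L-lipschitz_on UNIV (f i)) \<and>
        (\<exists>f'. (\<forall>x. (f i has_real_derivative f' x) (at x)) \<and> continuous_on UNIV f' \<and>
              (\<forall>x. f' x \<le> 0)) \<and>
        (\<forall>x. f i x > 0) \<and>
        ((f i) \<longlongrightarrow> 0) at_top \<and>
        (\<forall>c\<ge>1. bdd_above ((\<lambda>x. f i x / f i (c * x)) ` {0..})))"

definition is_solution_S ::
  "nat \<Rightarrow> (nat \<Rightarrow> real) \<Rightarrow> (nat \<Rightarrow> real) \<Rightarrow> (nat \<Rightarrow> real) \<Rightarrow> (nat \<Rightarrow> nat \<Rightarrow> real)
   \<Rightarrow> (nat \<Rightarrow> real \<Rightarrow> real) \<Rightarrow> (nat \<Rightarrow> real \<Rightarrow> real) \<Rightarrow> (nat \<Rightarrow> real)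
   \<Rightarrow> (nat \<Rightarrow> real \<Rightarrow> real) \<Rightarrow> (nat \<Rightarrow> real \<Rightarrow> real) \<Rightarrow> bool" where
  "is_solution_S n muA muJ beta zeta f \<phi> tau0 A \<tau> \<longleftrightarrow>
     (\<forall>i<n.
        continuous_on UNIV (A i) \<and>
        (\<forall>t. A i t \<ge> 0) \<and>
        (\<forall>t\<le>0. A i t = \<phi> i t) \<and>
        (\<forall>t\<ge>0. \<tau> i t \<ge> 0) \<and>
        \<tau> i 0 = tau0 i \<and>
        (\<forall>t\<ge>0.
           ((A i) has_real_derivative
              (- muA i * A i t
               + beta i * exp (- muJ i * \<tau> i t)
                 * f i (\<Sum>j<n. zeta i j * A j t)
                 / f i (\<Sum>j<n. zeta i j * A j (t - \<tau> i t))
                 * A i (t - \<tau> i t))) (at t within {0..})) \<and>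
        (\<forall>t\<ge>0.
           integral {t - \<tau> i t..t} (\<lambda>\<sigma>. f i (\<Sum>j<n. zeta i j * A j \<sigma>))
           = integral {- tau0 i..0} (\<lambda>\<sigma>. f i (\<Sum>j<n. zeta i j * \<phi> j \<sigma>))))"

end

theory Submission
  imports Defs
begin


locale sysS =
  fixes n :: nat and muA muJ beta :: "nat \<Rightarrow> real" and zeta :: "nat \<Rightarrow> nat \<Rightarrow> real"
    and f A \<tau> :: "nat \<Rightarrow> real \<Rightarrow> real" and tau0 :: "nat \<Rightarrow> real" and T0 P :: real
  assumes muA: "\<And>i. i<n \<Longrightarrow> muA i > 0" and muJ: "\<And>i. i<n \<Longrightarrow> muJ i > 0"
    and beta: "\<And>i. i<n \<Longrightarrow> beta i > 0"
    and zii: "\<And>i. i<n \<Longrightarrow> zeta i i > 0" and zij: "\<And>i j. i<n \<Longrightarrow> j<n \<Longrightarrow> zeta i j \<ge> 0"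
    and fpos: "\<And>i x. i<n \<Longrightarrow> f i x > 0"
    and fmono: "\<And>i x y. i<n \<Longrightarrow> x \<le> y \<Longrightarrow> f i y \<le> f i x"
    and fcont: "\<And>i. i<n \<Longrightarrow> continuous_on UNIV (f i)"
    and flim: "\<And>i. i<n \<Longrightarrow> (f i \<longlongrightarrow> 0) at_top"
    and fratio: "\<And>i c. i<n \<Longrightarrow> c \<ge> 1 \<Longrightarrow> \<exists>B. \<forall>x\<ge>0. f i x / f i (c*x) \<le> B"
    and Acont: "\<And>i. i<n \<Longrightarrow> continuous_on UNIV (A i)"
    and Anonneg: "\<And>i t. i<n \<Longrightarrow> A i t \<ge> 0"
    and taunn: "\<And>i t. i<n \<Longrightarrow> t \<ge> 0 \<Longrightarrow> \<tau> i t \<ge> 0"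
    and deriv: "\<And>i t. i<n \<Longrightarrow> t \<ge> 0 \<Longrightarrow>
           ((A i) has_real_derivative
              (- muA i * A i t
               + beta i * exp (- muJ i * \<tau> i t)
                 * f i (\<Sum>j<n. zeta i j * A j t)
                 / f i (\<Sum>j<n. zeta i j * A j (t - \<tau> i t))
                 * A i (t - \<tau> i t))) (at t within {0..})"
    and inteq: "\<And>i t. i<n \<Longrightarrow> t\<ge>0 \<Longrightarrow>
           integral {t - \<tau> i t..t} (\<lambda>\<sigma>. f i (\<Sum>j<n. zeta i j * A j \<sigma>)) = 1"
    and initint: "\<And>i. i<n \<Longrightarrow> integral {-tau0 i..0} (\<lambda>\<sigma>. f i (\<Sum>j<n. zeta i j * A j \<sigma>)) = 1"
    and tau0nn: "\<And>i. i<n \<Longrightarrow> 0 \<le> tau0 i" and tau0T: "\<And>i. i<n \<Longrightarrow> tau0 i \<le> T0"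
    and Pbd: "\<And>k t. k<n \<Longrightarrow> -T0 \<le> t \<Longrightarrow> t \<le> 0 \<Longrightarrow> A k t \<le> P" and P0: "0 \<le> P"
begin

definition Z where "Z i u = (\<Sum>j<n. zeta i j * A j u)"

lemma Zcont: "continuous_on UNIV (Z i)"
  unfolding Z_def by (intro continuous_intros) (auto intro: Acont)

lemma gcont: assumes "i<n" shows "continuous_on S (\<lambda>u. f i (Z i u))"
  by (rule continuous_on_subset[OF continuous_on_compose2[OF fcont[OF assms] Zcont]]) auto

lemma gint: "i<n \<Longrightarrow> (\<lambda>u. f i (Z i u)) integrable_on {a..b}"
  by (rule integrable_continuous_real[OF gcont])

lemma gpos_int: assumes "i<n" "a < b" shows "integral {a..b} (\<lambda>u. f i (Z i u)) > 0"
proof -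
  obtain x where x: "x \<in> {a..b}" "\<And>y. y \<in> {a..b} \<Longrightarrow> f i (Z i x) \<le> f i (Z i y)"
    using continuous_attains_inf[of "{a..b}" "\<lambda>u. f i (Z i u)"] gcont[OF assms(1)] assms(2)
    by auto
  have "integral {a..b} (\<lambda>u. f i (Z i x)) \<le> integral {a..b} (\<lambda>u. f i (Z i u))"
    by (rule integral_le) (auto intro: gint[OF assms(1)] x(2))
  moreover have "integral {a..b} (\<lambda>u. f i (Z i x)) = (b - a) * f i (Z i x)"
    using assms by simp
  moreover have "(b - a) * f i (Z i x) > 0" using assms fpos by simp
  ultimately show ?thesis by linarith
qed

lemma Zge: assumes "i<n" shows "Z i u \<ge> zeta i i * A i u"
  unfolding Z_def
  by (rule member_le_sum[where f="\<lambda>j. zeta i j * A j u"]) (use assms zij Anonneg in auto)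

lemma Zle: assumes "i<n" "\<And>k. k<n \<Longrightarrow> A k u \<le> M" shows "Z i u \<le> (\<Sum>j<n. zeta i j) * M"
  unfolding Z_def sum_distrib_right
  by (rule sum_mono) (use assms zij in \<open>auto intro: mult_left_mono\<close>)

lemma s_lower: assumes "i<n" "t\<ge>0" shows "-tau0 i \<le> t - \<tau> i t"
proof (rule ccontr)
  assume "\<not> ?thesis"
  hence lt: "t - \<tau> i t < -tau0 i" by simp
  let ?g = "\<lambda>u. f i (Z i u)"
  have e1: "integral {t - \<tau> i t..t} ?g = 1" using inteq[OF assms] unfolding Z_def .
  have e2: "integral {-tau0 i..0} ?g = 1" using initint[OF assms(1)] unfolding Z_def .
  have "integral {t - \<tau> i t..-tau0 i} ?g + integral {-tau0 i..t} ?g = integral {t - \<tau> i t..t} ?g"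
    using Henstock_Kurzweil_Integration.integral_combine[where a="t - \<tau> i t" and c="-tau0 i" and b=t and f="?g"] lt tau0nn[OF assms(1)] assms gint[OF assms(1)] by auto
  moreover have "integral {-tau0 i..0} ?g + integral {0..t} ?g = integral {-tau0 i..t} ?g"
    using Henstock_Kurzweil_Integration.integral_combine[where a="-tau0 i" and c=0 and b=t and f="?g"] lt tau0nn[OF assms(1)] assms gint[OF assms(1)] by auto
  moreover have "integral {0..t} ?g \<ge> 0"
    by (rule integral_nonneg) (use gint[OF assms(1)] fpos[OF assms(1)] in \<open>auto intro: less_imp_le\<close>)
  moreover have "integral {t - \<tau> i t..-tau0 i} ?g > 0" by (rule gpos_int[OF assms(1) lt])
  ultimately show False using e1 e2 by linarith
qed

lemma deriv_at: assumes "i<n" "t > 0"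
  shows "((A i) has_real_derivative
              (- muA i * A i t
               + beta i * exp (- muJ i * \<tau> i t)
                 * f i (Z i t) / f i (Z i (t - \<tau> i t)) * A i (t - \<tau> i t))) (at t)"
proof -
  have eq: "at t within {0..} = at t" using assms(2) by (intro at_within_interior) auto
  show ?thesis using deriv[OF assms(1), of t] assms(2) unfolding Z_def eq by simp
qed

lemma fmono_lt: "i<n \<Longrightarrow> f i x \<ge> 0" using fpos less_imp_le by blast

lemma key:
  assumes j: "j<n" and t: "t > 0" and Mdef: "A j t = M'"
    and below: "\<And>k u. k<n \<Longrightarrow> 0 \<le> u \<Longrightarrow> u \<le> t \<Longrightarrow> A k u \<le> M'"
    and PM: "P < M'"
    and B: "\<And>x. x \<ge> 0 \<Longrightarrow> f j x / f j (((\<Sum>l<n. zeta j l)/zeta j j) * x) \<le> B" and Bpos: "B > 0"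
    and c0: "c0 = muA j / (beta j * B)"
    and L: "L = max 0 (- ln c0 / muJ j)"
    and thr1: "P < c0 * M'"
    and thr2: "L * f j (zeta j j * (c0 * exp (- muA j * L) * M')) < 1"
  shows False
proof -
  define s where "s = t - \<tau> j t"
  define K where "K = (\<Sum>l<n. zeta j l)"
  define E where "E = exp (- muJ j * \<tau> j t)"
  define a where "a = A j s"
  have tau: "\<tau> j t \<ge> 0" using taunn[OF j] t by simp
  have sl: "-T0 \<le> s" using s_lower[OF j, of t] tau0T[OF j] t unfolding s_def by simp
  have st: "s \<le> t" using tau s_def by simp
  have allM: "A k u \<le> M'" if "k<n" "-T0 \<le> u" "u \<le> t" for k u
  proof (cases "u \<le> 0")
    case True thus ?thesis using Pbd[OF that(1) that(2)] PM by simp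
  next
    case False thus ?thesis using below[OF that(1)] that by simp
  qed
  have M'pos: "M' > 0" using PM P0 by simp
  have mu: "muA j > 0" and be: "beta j > 0" and mJ: "muJ j > 0" and z: "zeta j j > 0"
    using muA muJ beta zii j by auto
  define D where "D = - muA j * A j t + beta j * E * f j (Z j t) / f j (Z j s) * a"
  have der: "(A j has_real_derivative D) (at t)"
    using deriv_at[OF j t] unfolding D_def E_def s_def a_def .
  have D0: "D \<ge> 0"
  proof (rule ccontr)
    assume "\<not> D \<ge> 0"
    then obtain d where d: "d > 0" "\<And>h. h > 0 \<Longrightarrow> h < d \<Longrightarrow> A j t < A j (t - h)"
      using DERIV_neg_dec_left[OF der] by auto
    define h where "h = min (d/2) t"
    have "A j t < A j (t - h)" using d t unfolding h_def by auto
    moreover have "A j (t - h) \<le> M'" using below[OF j] t d unfolding h_def by auto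
    ultimately show False using Mdef by simp
  qed
  have E: "0 < E" "E \<le> 1" using tau mJ unfolding E_def by (auto simp: mult_nonneg_nonneg)
  have ZA: "Z j t \<ge> zeta j j * M'" using Zge[OF j, of t] Mdef by simp
  have fZt: "f j (Z j t) \<le> f j (zeta j j * M')" using fmono[OF j ZA] .
  have Zs: "Z j s \<le> K * M'" unfolding K_def by (rule Zle[OF j]) (use allM sl st in auto)
  have fZs: "f j (K * M') \<le> f j (Z j s)" using fmono[OF j Zs] .
  have Kz: "K / zeta j j * (zeta j j * M') = K * M'" using z by simp
  have RB: "f j (Z j t) / f j (Z j s) \<le> B"
  proof -
    have "f j (Z j t) / f j (Z j s) \<le> f j (zeta j j * M') / f j (K * M')"
      by (rule frac_le) (use fZt fZs fpos[OF j] in \<open>auto intro: less_imp_le\<close>)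
    also have "\<dots> \<le> B" using B[of "zeta j j * M'"] z M'pos Kz unfolding K_def by simp
    finally show ?thesis .
  qed
  define R where "R = f j (Z j t) / f j (Z j s)"
  have R0: "R > 0" unfolding R_def using fpos[OF j] by simp
  have a0: "0 \<le> a" and aM: "a \<le> M'" unfolding a_def using Anonneg[OF j] allM[OF j sl st] by auto
  have main: "muA j * M' \<le> beta j * E * R * a"
    using D0 Mdef unfolding D_def R_def by (simp add: field_simps)
  have "beta j * E * R * a \<le> beta j * E * B * M'"
    using RB aM a0 R0 E be unfolding R_def[symmetric]
    by (intro mult_mono mult_left_mono) (auto simp: mult_nonneg_nonneg)
  hence "muA j * M' \<le> (beta j * E * B) * M'" using main by simp
  hence "muA j \<le> beta j * E * B" using M'pos by simp
  hence Ec0: "c0 \<le> E" unfolding c0 using be Bpos by (simp add: field_simps)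
  have c0pos: "c0 > 0" unfolding c0 using mu be Bpos by simp
  have ER: "E * R \<le> B" using E R0 RB unfolding R_def[symmetric]
    by (metis mult_left_le_one_le less_imp_le order_trans)
  have "beta j * E * R * a = beta j * (E * R) * a" by simp
  also have "\<dots> \<le> beta j * B * a"
    using ER be a0 by (intro mult_right_mono mult_left_mono) auto
  finally have "beta j * E * R * a \<le> beta j * B * a" .
  hence "muA j * M' \<le> beta j * B * a" using main by simp
  hence ac0: "c0 * M' \<le> a" unfolding c0 using be Bpos by (simp add: field_simps)
  have tauL: "\<tau> j t \<le> L"
  proof -
    have "ln c0 \<le> ln E" using Ec0 c0pos by simp
    also have "ln E = - muJ j * \<tau> j t" unfolding E_def by simp
    finally have "\<tau> j t \<le> - ln c0 / muJ j" using mJ by (simp add: field_simps)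
    thus ?thesis unfolding L by simp
  qed
  have L0: "L \<ge> 0" unfolding L by simp
  have s0: "s \<ge> 0"
  proof (rule ccontr)
    assume "\<not> s \<ge> 0"
    hence "a \<le> P" unfolding a_def using Pbd[OF j sl] by simp
    thus False using thr1 ac0 by simp
  qed
  have grow: "exp (- muA j * L) * a \<le> A j w" if w: "s \<le> w" "w \<le> t" for w
  proof -
    let ?h = "\<lambda>x. exp (muA j * x) * A j x"
    have "?h s \<le> ?h w"
    proof (rule DERIV_nonneg_imp_increasing_open[OF w(1)])
      fix x assume x: "s < x" "x < w"
      hence xp: "x > 0" using s0 by simp
      define Dx where "Dx = - muA j * A j x
               + beta j * exp (- muJ j * \<tau> j x)
                 * f j (Z j x) / f j (Z j (x - \<tau> j x)) * A j (x - \<tau> j x)"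
      have dx: "(A j has_real_derivative Dx) (at x)" using deriv_at[OF j xp] unfolding Dx_def .
      have "(?h has_real_derivative (exp (muA j * x) * muA j * A j x + exp (muA j * x) * Dx)) (at x)"
      proof -
        have ed: "((\<lambda>x. exp (muA j * x)) has_real_derivative exp (muA j * x) * muA j) (at x)"
          by (auto intro!: derivative_eq_intros)
        show ?thesis using DERIV_mult[OF ed dx] by (simp add: mult.commute)
      qed
      moreover have "Dx + muA j * A j x \<ge> 0"
        unfolding Dx_def using be fpos[OF j] Anonneg[OF j]
        by (simp add: mult_nonneg_nonneg less_imp_le)
      hence "exp (muA j * x) * muA j * A j x + exp (muA j * x) * Dx \<ge> 0"
        by (simp add: distrib_left[symmetric] mult.assoc)
      ultimately show "\<exists>y. (?h has_real_derivative y) (at x) \<and> y \<ge> 0" by blast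
    next
      show "continuous_on {s..w} ?h"
        by (intro continuous_intros continuous_on_subset[OF Acont[OF j]]) auto
    qed
    hence "exp (muA j * s) * a \<le> exp (muA j * w) * A j w" unfolding a_def .
    hence ineq: "exp (muA j * s) * a \<le> A j w * exp (muA j * w)" by (simp add: mult.commute)
    have "exp (muA j * (s - w)) * a = (exp (muA j * s) * a) / exp (muA j * w)"
      by (simp add: right_diff_distrib exp_diff)
    also have "\<dots> \<le> A j w" using ineq by (simp add: pos_divide_le_eq)
    finally have "exp (muA j * (s - w)) * a \<le> A j w" .
    moreover have "exp (- muA j * L) \<le> exp (muA j * (s - w))"
    proof -
      have "-L \<le> s - w" using tauL w unfolding s_def by simp
      hence "muA j * (-L) \<le> muA j * (s - w)" using mu by (intro mult_left_mono) auto
      thus ?thesis by simp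
    qed
    ultimately show ?thesis using a0 by (meson mult_right_mono order_trans)
  qed
  let ?v = "f j (zeta j j * (c0 * exp (- muA j * L) * M'))"
  have pt: "f j (Z j w) \<le> ?v" if w: "s \<le> w" "w \<le> t" for w
  proof -
    have "c0 * exp (- muA j * L) * M' = exp (- muA j * L) * (c0 * M')" by simp
    also have "\<dots> \<le> exp (- muA j * L) * a" using ac0 by (intro mult_left_mono) auto
    also have "\<dots> \<le> A j w" using grow[OF w] .
    finally have "c0 * exp (- muA j * L) * M' \<le> A j w" .
    hence "zeta j j * (c0 * exp (- muA j * L) * M') \<le> zeta j j * A j w"
      using z by (intro mult_left_mono) auto
    hence "zeta j j * (c0 * exp (- muA j * L) * M') \<le> Z j w"
      using Zge[OF j, of w] by linarith
    thus ?thesis using fmono[OF j] by simp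
  qed
  have "1 = integral {s..t} (\<lambda>u. f j (Z j u))"
    using inteq[OF j, of t] t unfolding s_def Z_def by simp
  also have "\<dots> \<le> integral {s..t} (\<lambda>u. ?v)"
    by (rule integral_le) (use gint[OF j] pt in auto)
  also have "\<dots> = \<tau> j t * ?v" using st unfolding s_def by simp
  also have "\<dots> \<le> L * ?v" using tauL fmono_lt[OF j] by (simp add: mult_right_mono)
  finally show False using thr2 by simp
qed

lemma thr:
  assumes j: "j<n" and c0pos: "c0 > 0" and L0: "L \<ge> 0"
  shows "\<exists>Mj>0. \<forall>x\<ge>Mj. P < c0 * x \<and> L * f j (zeta j j * (c0 * exp (- muA j * L) * x)) < 1"
proof -
  define c2 where "c2 = zeta j j * (c0 * exp (- muA j * L))"
  have c2: "c2 > 0" unfolding c2_def using zii[OF j] c0pos by simp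
  have "eventually (\<lambda>y. f j y < 1 / (L + 1)) at_top"
    using order_tendstoD(2)[OF flim[OF j], of "1/(L+1)"] L0 by simp
  then obtain N where N: "\<And>y. y \<ge> N \<Longrightarrow> f j y < 1 / (L + 1)"
    by (auto simp: eventually_at_top_linorder)
  define Mj where "Mj = max 1 (max (P / c0 + 1) (N / c2 + 1))"
  have "Mj > 0" unfolding Mj_def by simp
  moreover have "P < c0 * x \<and> L * f j (zeta j j * (c0 * exp (- muA j * L) * x)) < 1" if x: "x \<ge> Mj" for x
  proof
    have "P / c0 < x" using x unfolding Mj_def by simp
    thus "P < c0 * x" using c0pos by (simp add: divide_less_eq mult.commute)
    have "N / c2 \<le> x" using x unfolding Mj_def by simp
    hence "N \<le> c2 * x" using c2 by (simp add: pos_divide_le_eq mult.commute)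
    hence "f j (c2 * x) < 1 / (L + 1)" by (rule N)
    hence "(L + 1) * f j (c2 * x) < 1" using L0 by (simp add: field_simps)
    moreover have "L * f j (c2 * x) \<le> (L + 1) * f j (c2 * x)" using fpos[OF j] by simp
    moreover have "zeta j j * (c0 * exp (- muA j * L) * x) = c2 * x" unfolding c2_def by (simp only: mult.assoc)
    ultimately show "L * f j (zeta j j * (c0 * exp (- muA j * L) * x)) < 1" by (simp only:)
  qed
  ultimately show ?thesis by blast
qed

lemma bounded: "\<exists>M. M \<ge> P \<and> (\<forall>k<n. \<forall>T\<ge>0. A k T \<le> M)"
proof -
  define K where "K j = (\<Sum>l<n. zeta j l)" for j
  have Kz: "zeta j j \<le> K j" if "j<n" for j
    unfolding K_def by (rule member_le_sum) (use that zij in auto)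
  have c1: "K j / zeta j j \<ge> 1" if "j<n" for j using Kz[OF that] zii[OF that] by simp
  have "\<forall>j. \<exists>B. j<n \<longrightarrow> B > 0 \<and> (\<forall>x\<ge>0. f j x / f j ((K j / zeta j j) * x) \<le> B)"
  proof (intro allI)
    fix j show "\<exists>B. j<n \<longrightarrow> B > 0 \<and> (\<forall>x\<ge>0. f j x / f j ((K j / zeta j j) * x) \<le> B)"
    proof (cases "j<n")
      case True
      then obtain B where "\<forall>x\<ge>0. f j x / f j ((K j / zeta j j) * x) \<le> B"
        using fratio[OF True c1[OF True]] by blast
      hence "max 1 B > 0 \<and> (\<forall>x\<ge>0. f j x / f j ((K j / zeta j j) * x) \<le> max 1 B)"
        by (auto intro: le_max_iff_disj[THEN iffD2])
      thus ?thesis by blast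
    qed simp
  qed
  then obtain Bf where Bf: "\<And>j. j<n \<Longrightarrow> Bf j > 0 \<and> (\<forall>x\<ge>0. f j x / f j ((K j / zeta j j) * x) \<le> Bf j)"
    by metis
  define c0 where "c0 j = muA j / (beta j * Bf j)" for j
  define L where "L j = max 0 (- ln (c0 j) / muJ j)" for j
  have "\<forall>j. \<exists>Mj. j<n \<longrightarrow> Mj > 0 \<and> (\<forall>x\<ge>Mj. P < c0 j * x \<and> L j * f j (zeta j j * (c0 j * exp (- muA j * L j) * x)) < 1)"
  proof (intro allI)
    fix j show "\<exists>Mj. j<n \<longrightarrow> Mj > 0 \<and> (\<forall>x\<ge>Mj. P < c0 j * x \<and> L j * f j (zeta j j * (c0 j * exp (- muA j * L j) * x)) < 1)"
    proof (cases "j<n")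
      case True
      have "c0 j > 0" unfolding c0_def using muA[OF True] beta[OF True] Bf[OF True] by simp
      moreover have "L j \<ge> 0" unfolding L_def by simp
      ultimately show ?thesis using thr[OF True] by blast
    qed simp
  qed
  then obtain Mf where Mf: "\<And>j. j<n \<Longrightarrow> Mf j > 0 \<and> (\<forall>x\<ge>Mf j. P < c0 j * x \<and> L j * f j (zeta j j * (c0 j * exp (- muA j * L j) * x)) < 1)"
    by metis
  define M where "M = P + (\<Sum>j<n. Mf j)"
  have MP: "M \<ge> P" unfolding M_def using Mf by (auto intro: sum_nonneg less_imp_le)
  have MM: "Mf j \<le> M" if "j<n" for j
  proof -
    have "Mf j \<le> (\<Sum>j<n. Mf j)" by (rule member_le_sum) (use that Mf in \<open>auto intro: less_imp_le\<close>)
    thus ?thesis unfolding M_def using P0 by simp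
  qed
  have "A k0 T \<le> M" if k0: "k0<n" and T: "T \<ge> 0" for k0 T
  proof (rule ccontr)
    assume "\<not> ?thesis"
    hence AT: "A k0 T > M" by simp
    have "\<forall>k. \<exists>tk. k<n \<longrightarrow> tk \<in> {0..T} \<and> (\<forall>u\<in>{0..T}. A k u \<le> A k tk)"
    proof (intro allI)
      fix k show "\<exists>tk. k<n \<longrightarrow> tk \<in> {0..T} \<and> (\<forall>u\<in>{0..T}. A k u \<le> A k tk)"
      proof (cases "k<n")
        case True thus ?thesis
          using continuous_attains_sup[of "{0..T}" "A k"] T continuous_on_subset[OF Acont[OF True]]
          by auto
      qed simp
    qed
    then obtain tk where tk: "\<And>k. k<n \<Longrightarrow> tk k \<in> {0..T} \<and> (\<forall>u\<in>{0..T}. A k u \<le> A k (tk k))"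
      by metis
    define S where "S = (\<lambda>k. A k (tk k)) ` {..<n}"
    have Sf: "finite S" "S \<noteq> {}" unfolding S_def using k0 by auto
    obtain j where j: "j<n" "A j (tk j) = Max S" using Max_in[OF Sf] unfolding S_def by auto
    have Smax: "A k (tk k) \<le> Max S" if "k<n" for k using Max_ge[OF Sf(1)] that unfolding S_def by auto
    define t where "t = tk j"
    define M' where "M' = A j t"
    have "A k0 T \<le> A k0 (tk k0)" using tk[OF k0] T by auto
    hence M'M: "M < M'" using Smax[OF k0] AT j unfolding M'_def t_def by simp
    have PM: "P < M'" using MP M'M by simp
    have below: "A k u \<le> M'" if "k<n" "0 \<le> u" "u \<le> t" for k u
    proof -
      have "t \<le> T" using tk[OF j(1)] unfolding t_def by simp
      hence "A k u \<le> A k (tk k)" using tk[OF that(1)] that by auto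
      thus ?thesis using Smax[OF that(1)] j unfolding M'_def t_def by simp
    qed
    have tpos: "t > 0"
    proof (rule ccontr)
      assume "\<not> t > 0"
      hence "t = 0" using tk[OF j(1)] unfolding t_def by simp
      hence "M' \<le> P" using Pbd[OF j(1), of 0] tau0T[OF j(1)] tau0nn[OF j(1)] unfolding M'_def by simp
      thus False using PM by simp
    qed
    have thrj: "P < c0 j * M' \<and> L j * f j (zeta j j * (c0 j * exp (- muA j * L j) * M')) < 1"
      using Mf[OF j(1)] MM[OF j(1)] M'M by simp
    show False
      by (rule key[OF j(1) tpos M'_def[symmetric] below PM _ _ c0_def L_def])
         (use Bf[OF j(1)] thrj in \<open>auto simp: K_def\<close>)
  qed
  thus ?thesis using MP by blast
qed

lemma final: assumes i: "i<n" shows "\<exists>t>0. t - \<tau> i t = 0"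
proof -
  obtain M where MP: "M \<ge> P" and Mb: "\<And>k T. k<n \<Longrightarrow> T\<ge>0 \<Longrightarrow> A k T \<le> M" using bounded by blast
  define K where "K = (\<Sum>j<n. zeta i j)"
  define d where "d = f i (K * M)"
  let ?g = "\<lambda>u. f i (Z i u)"
  have d: "d > 0" unfolding d_def using fpos[OF i] by simp
  have gl: "d \<le> ?g u" if "u \<ge> 0" for u
  proof -
    have "Z i u \<le> K * M" unfolding K_def by (rule Zle[OF i]) (use Mb that in auto)
    thus ?thesis unfolding d_def using fmono[OF i] by simp
  qed
  define G where "G x = integral {0..x} ?g" for x
  have "integral {0..1/d} (\<lambda>u. d) \<le> integral {0..1/d} ?g"
    by (rule integral_le) (use gint[OF i] gl in auto)
  moreover have "integral {0..1/d} (\<lambda>u. d) = 1" using d by simp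
  ultimately have G1: "1 \<le> G (1/d)" unfolding G_def by simp
  have G0: "G 0 = 0" unfolding G_def by simp
  have Gc: "continuous_on {0..1/d} G" unfolding G_def
    by (rule indefinite_integral_continuous_1[OF gint[OF i]])
  obtain t where t: "0 \<le> t" "t \<le> 1/d" "G t = 1"
    using IVT'[of G 0 1 "1/d", OF _ G1 _ Gc] G0 d by auto
  have tp: "t > 0" using t G0 by (cases "t = 0") auto
  define s where "s = t - \<tau> i t"
  have st: "s \<le> t" using taunn[OF i] t unfolding s_def by simp
  have I1: "integral {s..t} ?g = 1" using inteq[OF i t(1)] unfolding s_def Z_def by simp
  have "s = 0"
  proof (rule ccontr)
    assume "s \<noteq> 0"
    show False
    proof (cases "s < 0")
      case True
      have "integral {s..0} ?g + integral {0..t} ?g = integral {s..t} ?g"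
        using Henstock_Kurzweil_Integration.integral_combine[where a=s and c=0 and b=t and f="?g"]
          True t gint[OF i] by auto
      moreover have "integral {s..0} ?g > 0" by (rule gpos_int[OF i True])
      ultimately show False using I1 t(3) unfolding G_def by simp
    next
      case False
      hence sp: "0 < s" using \<open>s \<noteq> 0\<close> by simp
      have "integral {0..s} ?g + integral {s..t} ?g = integral {0..t} ?g"
        using Henstock_Kurzweil_Integration.integral_combine[where a=0 and c=s and b=t and f="?g"]
          sp st gint[OF i] by auto
      moreover have "integral {0..s} ?g > 0" by (rule gpos_int[OF i sp])
      ultimately show False using I1 t(3) unfolding G_def by simp
    qed
  qed
  thus ?thesis using tp unfolding s_def by blast
qed

end


theorem lemma3p3:
  fixes n :: nat and \<alpha> :: real
    and muA muJ beta tau0 :: "nat \<Rightarrow> real" and zeta :: "nat \<Rightarrow> nat \<Rightarrow> real"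
    and f \<phi> A \<tau> :: "nat \<Rightarrow> real \<Rightarrow> real"
  assumes "\<alpha> > 0"
    and "assumption_A n muA muJ beta zeta f"
    and "\<forall>i<n. \<phi> i \<in> X_alpha \<alpha> \<and> (\<forall>t\<le>0. \<phi> i t \<ge> 0)"
    and "\<forall>i<n. tau0 i \<ge> 0"
    and "\<forall>i<n. integral {- tau0 i..0} (\<lambda>\<sigma>. f i (\<Sum>j<n. zeta i j * \<phi> j \<sigma>)) = 1"
    and "is_solution_S n muA muJ beta zeta f \<phi> tau0 A \<tau>"
  shows "\<forall>i<n. \<exists>t>0. t - \<tau> i t = 0"
proof -
  note AA = assms(2)[unfolded assumption_A_def]
  note SS = assms(6)[unfolded is_solution_S_def]
  have F1: "\<And>i. i<n \<Longrightarrow> muA i > 0" "\<And>i. i<n \<Longrightarrow> muJ i > 0" "\<And>i. i<n \<Longrightarrow> beta i > 0"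
    "\<And>i. i<n \<Longrightarrow> zeta i i > 0" "\<And>i j. i<n \<Longrightarrow> j<n \<Longrightarrow> zeta i j \<ge> 0"
    "\<And>i x. i<n \<Longrightarrow> f i x > 0" "\<And>i. i<n \<Longrightarrow> (f i \<longlongrightarrow> 0) at_top"
    using AA by auto
  have fmono: "\<And>i x y. i<n \<Longrightarrow> x \<le> y \<Longrightarrow> f i y \<le> f i x"
  proof -
    fix i and x y :: real assume i: "i<n" and xy: "x \<le> y"
    obtain f' where "\<forall>x. (f i has_real_derivative f' x) (at x)" "\<forall>x. f' x \<le> 0"
      using AA i by blast
    thus "f i y \<le> f i x" using DERIV_nonpos_imp_nonincreasing[OF xy, of "f i"] by blast
  qed
  have fcont: "\<And>i. i<n \<Longrightarrow> continuous_on UNIV (f i)"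
  proof -
    fix i assume i: "i<n"
    obtain L where "L-lipschitz_on UNIV (f i)" using AA i by blast
    thus "continuous_on UNIV (f i)" by (rule lipschitz_on_continuous_on)
  qed
  have fratio: "\<And>i c. i<n \<Longrightarrow> c \<ge> 1 \<Longrightarrow> \<exists>B. \<forall>x\<ge>0. f i x / f i (c*x) \<le> B"
  proof -
    fix i and c :: real assume i: "i<n" and c: "c \<ge> 1"
    have "bdd_above ((\<lambda>x. f i x / f i (c * x)) ` {0..})" using AA i c by simp
    then obtain B where "\<forall>y\<in>(\<lambda>x. f i x / f i (c * x)) ` {0..}. y \<le> B"
      unfolding bdd_above_def by blast
    thus "\<exists>B. \<forall>x\<ge>0. f i x / f i (c*x) \<le> B" by auto
  qed
  have F2: "\<And>i. i<n \<Longrightarrow> continuous_on UNIV (A i)" "\<And>i t. i<n \<Longrightarrow> A i t \<ge> 0"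
    "\<And>i t. i<n \<Longrightarrow> t \<ge> 0 \<Longrightarrow> \<tau> i t \<ge> 0"
    "\<And>i t. i<n \<Longrightarrow> t \<ge> 0 \<Longrightarrow>
           ((A i) has_real_derivative
              (- muA i * A i t
               + beta i * exp (- muJ i * \<tau> i t)
                 * f i (\<Sum>j<n. zeta i j * A j t)
                 / f i (\<Sum>j<n. zeta i j * A j (t - \<tau> i t))
                 * A i (t - \<tau> i t))) (at t within {0..})"
    "\<And>i t. i<n \<Longrightarrow> t\<ge>0 \<Longrightarrow>
           integral {t - \<tau> i t..t} (\<lambda>\<sigma>. f i (\<Sum>j<n. zeta i j * A j \<sigma>)) = 1"
    using SS assms(5) by auto
  have initint: "\<And>i. i<n \<Longrightarrow> integral {-tau0 i..0} (\<lambda>\<sigma>. f i (\<Sum>j<n. zeta i j * A j \<sigma>)) = 1"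
  proof -
    fix i assume i: "i<n"
    have "integral {-tau0 i..0} (\<lambda>\<sigma>. f i (\<Sum>j<n. zeta i j * A j \<sigma>))
        = integral {-tau0 i..0} (\<lambda>\<sigma>. f i (\<Sum>j<n. zeta i j * \<phi> j \<sigma>))"
      by (rule integral_cong) (use SS in auto)
    thus "integral {-tau0 i..0} (\<lambda>\<sigma>. f i (\<Sum>j<n. zeta i j * A j \<sigma>)) = 1" using assms(5) i by simp
  qed
  define T0 where "T0 = (\<Sum>i<n. tau0 i)"
  have tau0T: "\<And>i. i<n \<Longrightarrow> tau0 i \<le> T0"
    unfolding T0_def by (rule member_le_sum) (use assms(4) in auto)
  have tau0nn: "\<And>i. i<n \<Longrightarrow> 0 \<le> tau0 i" using assms(4) by auto
  have "T0 \<ge> 0" unfolding T0_def using assms(4) by (auto intro: sum_nonneg)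
  have "continuous_on {-T0..0} (\<lambda>t. \<Sum>k<n. A k t)"
    by (intro continuous_intros continuous_on_subset[OF F2(1)]) auto
  then obtain x where x: "\<And>y. y \<in> {-T0..0} \<Longrightarrow> (\<Sum>k<n. A k y) \<le> (\<Sum>k<n. A k x)"
    using continuous_attains_sup[of "{-T0..0}" "\<lambda>t. \<Sum>k<n. A k t"] \<open>T0 \<ge> 0\<close> by (auto simp: Ball_def)
  define P where "P = max 0 (\<Sum>k<n. A k x)"
  have Pbd: "\<And>k t. k<n \<Longrightarrow> -T0 \<le> t \<Longrightarrow> t \<le> 0 \<Longrightarrow> A k t \<le> P"
  proof -
    fix k t assume k: "k<n" and t: "-T0 \<le> t" "t \<le> 0"
    have "A k t \<le> (\<Sum>k<n. A k t)" by (rule member_le_sum) (use k F2(2) in auto)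
    thus "A k t \<le> P" using x[of t] t unfolding P_def by simp
  qed
  have P0: "0 \<le> P" unfolding P_def by simp
  interpret sysS n muA muJ beta zeta f A \<tau> tau0 T0 P
    by unfold_locales (fact F1 F2 fmono fcont fratio initint tau0nn tau0T Pbd P0)+
  show ?thesis using final by blast
qed

end
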